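(* Let $\sigma$ be a proper schedule and let $\sigma'$ be the intermediate schedule obtained from $\sigma$ by an admissible swap at step $j^*\in J$ between machines $M_h$ and $M_i$. Writing $C_j=C_j(\sigma)$ and $C'_j=C_j(\sigma')$: (1) $C'_j=C_j$ for all $j\notin J_H\cup J_I$; (2) $C'_j\le C_j$ for all $j\in J_H$; (3) $C'_j\ge C_j$ for all $j\in J_I$.
   Context: Jobs $J=\{1,\dots,n\}$, job $j$ with positive integer processing time $p_j$, are scheduled non-preemptively on $m$ identical machines $M_1,\dots,M_m$; $p_{\max}=\max_j p_j$, $P(X)=\sum_{j\in X}p_j$. A proper schedule $\sigma$ is a partition $J=J_1(\sigma)\cup\dots\cup J_m(\sigma)$, the jobs of $J_i(\sigma)$ processed on $M_i$ consecutively from time $0$ without idle time in increasing index order; $C_j(\sigma)$ is the completion time of $j$. $J_j=\{1,\dots,j\}$, $J_{i,j}(\sigma)=J_i(\sigma)\cap J_j$, $\Delta_{h,i,j}(\sigma)=P(J_{h,j}(\sigma))-P(J_{i,j}(\sigma))$. The swap: admissible for proper $\sigma$ at step $j^*$ with machines $M_h,M_i$ if $j^*\in J_h(\sigma)$, $|J_i(\sigma)\setminus J_{i,j^*}(\sigma)|\ge 2p_{\max}$, and $\Delta_{h,i,j^*}(\sigma)\ge 4p_{\max}^2$. Let $J_I$ be the first (smallest-index) $2p_{\max}$ jobs of $J_i(\sigma)\setminus J_{i,j^*}(\sigma)$ and $J_H$ the last (largest-index) $2p_{\max}$ jobs of $J_{h,j^*}(\sigma)$; choose non-empty $J_{H'}\subseteq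 J_H$, $J_{I'}\subseteq J_I$ with $P(J_{H'})=P(J_{I'})$. The intermediate schedule $\sigma'$ is obtained by modifying only $M_h$ and $M_i$: on $M_h$ the time interval occupied by $J_H$ in $\sigma$ is filled by the jobs of $J_H\setminus J_{H'}$ (in their order in $\sigma$) followed by those of $J_{I'}$ (in their order in $\sigma$); on $M_i$ the interval occupied by $J_I$ is filled by $J_{H'}$ followed by $J_I\setminus J_{I'}$ (each in their order in $\sigma$); all other jobs keep their positions. *)

theory Defs
  imports Main
begin

text \<open>Jobs are 1..n, machines are 1..m, processing times p :: nat => nat.
A proper schedule is given by its partition Js :: nat => nat set (Js i = J_i(sigma)).
A general (not necessarily proper) schedule is given by the job sequence on each
machine, L :: nat => nat list; jobs run consecutively from time 0 without idle time.\<close>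

definition P :: "(nat \<Rightarrow> nat) \<Rightarrow> nat set \<Rightarrow> nat" where
  "P p X = (\<Sum>j\<in>X. p j)"

definition pmax :: "nat \<Rightarrow> (nat \<Rightarrow> nat) \<Rightarrow> nat" where
  "pmax n p = Max (p ` {1..n})"

definition proper_partition :: "nat \<Rightarrow> nat \<Rightarrow> (nat \<Rightarrow> nat set) \<Rightarrow> bool" where
  "proper_partition n m Js \<longleftrightarrow>
     (\<Union>i\<in>{1..m}. Js i) = {1..n} \<and>
     (\<forall>i\<in>{1..m}. \<forall>i'\<in>{1..m}. i \<noteq> i' \<longrightarrow> Js i \<inter> Js i' = {})"

definition seqs_of :: "(nat \<Rightarrow> nat set) \<Rightarrow> nat \<Rightarrow> nat list" where
  "seqs_of Js = (\<lambda>i. sorted_list_of_set (Js i))"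

definition ctime :: "(nat \<Rightarrow> nat) \<Rightarrow> nat \<Rightarrow> (nat \<Rightarrow> nat list) \<Rightarrow> nat \<Rightarrow> nat" where
  "ctime p m L j = (\<Sum>i\<in>{1..m}. if j \<in> set (L i)
       then sum_list (map p (takeWhile (\<lambda>k. k \<noteq> j) (L i))) + p j else 0)"

definition Jpre :: "(nat \<Rightarrow> nat set) \<Rightarrow> nat \<Rightarrow> nat \<Rightarrow> nat set" where
  "Jpre Js i j = {k \<in> Js i. k \<le> j}"

definition Delta :: "(nat \<Rightarrow> nat) \<Rightarrow> (nat \<Rightarrow> nat set) \<Rightarrow> nat \<Rightarrow> nat \<Rightarrow> nat \<Rightarrow> int" where
  "Delta p Js h i j = int (P p (Jpre Js h j)) - int (P p (Jpre Js i j))"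

definition admissible_swap ::
  "nat \<Rightarrow> nat \<Rightarrow> (nat \<Rightarrow> nat) \<Rightarrow> (nat \<Rightarrow> nat set) \<Rightarrow> nat \<Rightarrow> nat \<Rightarrow> nat \<Rightarrow> bool" where
  "admissible_swap n m p Js jstar h i \<longleftrightarrow>
     h \<in> {1..m} \<and> i \<in> {1..m} \<and> jstar \<in> Js h \<and>
     card (Js i - Jpre Js i jstar) \<ge> 2 * pmax n p \<and>
     Delta p Js h i jstar \<ge> 4 * int (pmax n p) ^ 2"

definition JI :: "nat \<Rightarrow> (nat \<Rightarrow> nat) \<Rightarrow> (nat \<Rightarrow> nat set) \<Rightarrow> nat \<Rightarrow> nat \<Rightarrow> nat set" where
  "JI n p Js jstar i = set (take (2 * pmax n p) (sorted_list_of_set (Js i - Jpre Js i jstar)))"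

definition JH :: "nat \<Rightarrow> (nat \<Rightarrow> nat) \<Rightarrow> (nat \<Rightarrow> nat set) \<Rightarrow> nat \<Rightarrow> nat \<Rightarrow> nat set" where
  "JH n p Js jstar h = set (drop (card (Jpre Js h jstar) - 2 * pmax n p)
                              (sorted_list_of_set (Jpre Js h jstar)))"

definition replace_block :: "nat list \<Rightarrow> nat set \<Rightarrow> nat list \<Rightarrow> nat list" where
  "replace_block xs S ys =
     takeWhile (\<lambda>k. k \<notin> S) xs @ ys @ filter (\<lambda>k. k \<notin> S) (dropWhile (\<lambda>k. k \<notin> S) xs)"

definition intermediate ::
  "nat \<Rightarrow> (nat \<Rightarrow> nat) \<Rightarrow> (nat \<Rightarrow> nat set) \<Rightarrow> nat \<Rightarrow> nat \<Rightarrow> nat \<Rightarrow> nat set \<Rightarrow> nat set \<Rightarrow> nat \<Rightarrow> nat list" where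
  "intermediate n p Js jstar h i H' I' =
     (let L = seqs_of Js; H = JH n p Js jstar h; I = JI n p Js jstar i in
      L(h := replace_block (L h) H
               (filter (\<lambda>k. k \<notin> H') (sorted_list_of_set H) @ sorted_list_of_set I'),
        i := replace_block (L i) I
               (sorted_list_of_set H' @ filter (\<lambda>k. k \<notin> I') (sorted_list_of_set I))))"

end

theory Submission imports Defs begin

definition pre :: "(nat \<Rightarrow> nat) \<Rightarrow> nat list \<Rightarrow> nat \<Rightarrow> nat" where
  "pre p xs j = sum_list (map p (takeWhile (\<lambda>k. k \<noteq> j) xs))"

lemma sl_set: "sorted xs \<Longrightarrow> distinct xs \<Longrightarrow> sorted_list_of_set (set xs) = xs"
  by (simp add: sorted_list_of_set_sort_remdups distinct_remdups_id sorted_sort_id)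

lemma pre_app_notin: "j \<notin> set A \<Longrightarrow> pre p (A @ X) j = sum_list (map p A) + pre p X j"
  unfolding pre_def by (subst takeWhile_append2) auto

lemma pre_app_in: "j \<in> set A \<Longrightarrow> pre p (A @ X) j = pre p A j"
  unfolding pre_def by (subst takeWhile_append1) auto

lemma pre_le: "pre p xs j \<le> sum_list (map p xs)"
  unfolding pre_def by (induction xs) auto

lemma pre_filter_le: "Q j \<Longrightarrow> pre p (filter Q xs) j \<le> pre p xs j"
  unfolding pre_def by (induction xs) auto

lemma pre_filter_ge: "pre p xs j \<le> pre p (filter Q xs) j + sum_list (map p (filter (\<lambda>x. \<not> Q x) xs))"
  unfolding pre_def by (induction xs) auto

lemma sum_list_bound: "(\<forall>x\<in>set xs. p x \<le> c) \<Longrightarrow> sum_list (map p xs) \<le> length xs * c"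
  by (induction xs) auto

lemma sum_list_sorted: "finite X \<Longrightarrow> sum_list (map p (sorted_list_of_set X)) = P p X"
  unfolding P_def by (simp add: sum_list_distinct_conv_sum_set)

lemma sum_list_dist: "distinct xs \<Longrightarrow> sum_list (map p xs) = P p (set xs)"
  unfolding P_def by (simp add: sum_list_distinct_conv_sum_set)

lemma replace_block_eq:
  assumes "set A \<inter> S = {}" "set B \<inter> S = {}" "set Hl = S" "Hl \<noteq> []"
  shows "replace_block (A @ Hl @ B) S ys = A @ ys @ B"
proof -
  have "takeWhile (\<lambda>k. k \<notin> S) (A @ Hl @ B) = A"
    using assms by (subst takeWhile_append2) (auto, cases Hl, auto)
  moreover have "dropWhile (\<lambda>k. k \<notin> S) (A @ Hl @ B) = Hl @ B"
    using assms by (subst dropWhile_append2) (auto, cases Hl, auto)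
  moreover have "filter (\<lambda>k. k \<notin> S) (Hl @ B) = B"
    using assms by (auto simp: filter_empty_conv filter_id_conv)
  ultimately show ?thesis unfolding replace_block_def by simp
qed

lemma ctime_single:
  assumes "k0 \<in> {1..m}" "j \<in> set (L k0)" "\<forall>k\<in>{1..m}. j \<in> set (L k) \<longrightarrow> k = k0"
  shows "ctime p m L j = pre p (L k0) j + p j"
proof -
  have "ctime p m L j = (\<Sum>k\<in>{1..m}. if k = k0 then pre p (L k0) j + p j else 0)"
    unfolding ctime_def
  proof (rule sum.cong[OF refl])
    fix k assume k: "k \<in> {1..m}"
    show "(if j \<in> set (L k) then sum_list (map p (takeWhile (\<lambda>k. k \<noteq> j) (L k))) + p j else 0)
        = (if k = k0 then pre p (L k0) j + p j else 0)"
    proof (cases "k = k0")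
      case True then show ?thesis using assms(2) by (simp add: pre_def)
    next
      case False then show ?thesis using assms(3) k by auto
    qed
  qed
  also have "\<dots> = (if k0 \<in> {1..m} then pre p (L k0) j + p j else 0)"
    by (rule sum.delta) simp
  also have "\<dots> = pre p (L k0) j + p j" by (rule if_P[OF assms(1)])
  finally show ?thesis .
qed


theorem lemma4:
  fixes n m :: nat and p :: "nat \<Rightarrow> nat" and Js :: "nat \<Rightarrow> nat set"
    and jstar h i :: nat and H' I' :: "nat set"
  assumes pos: "\<forall>j\<in>{1..n}. p j > 0"
    and part: "proper_partition n m Js"
    and adm: "admissible_swap n m p Js jstar h i"
    and H'sub: "H' \<subseteq> JH n p Js jstar h" and H'ne: "H' \<noteq> {}"
    and I'sub: "I' \<subseteq> JI n p Js jstar i" and I'ne: "I' \<noteq> {}"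
    and eqP: "P p H' = P p I'"
  shows "(\<forall>j\<in>{1..n} - (JH n p Js jstar h \<union> JI n p Js jstar i).
            ctime p m (intermediate n p Js jstar h i H' I') j = ctime p m (seqs_of Js) j)
       \<and> (\<forall>j\<in>JH n p Js jstar h.
            ctime p m (intermediate n p Js jstar h i H' I') j \<le> ctime p m (seqs_of Js) j)
       \<and> (\<forall>j\<in>JI n p Js jstar i.
            ctime p m (intermediate n p Js jstar h i H' I') j \<ge> ctime p m (seqs_of Js) j)"
proof -
  define pm where "pm = pmax n p"
  define H where "H = JH n p Js jstar h"
  define I where "I = JI n p Js jstar i"
  define L where "L = seqs_of Js"
  define L' where "L' = intermediate n p Js jstar h i H' I'"
  from adm have hm: "h \<in> {1..m}" and im: "i \<in> {1..m}" and jh: "jstar \<in> Js h"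
    and del: "Delta p Js h i jstar \<ge> 4 * int pm ^ 2"
    unfolding admissible_swap_def pm_def by auto
  have sub: "\<forall>k\<in>{1..m}. Js k \<subseteq> {1..n}" using part unfolding proper_partition_def by blast
  have disj: "\<forall>k\<in>{1..m}. \<forall>k'\<in>{1..m}. k \<noteq> k' \<longrightarrow> Js k \<inter> Js k' = {}"
    using part unfolding proper_partition_def by blast
  have cover: "\<forall>j\<in>{1..n}. \<exists>k\<in>{1..m}. j \<in> Js k"
    using part unfolding proper_partition_def by blast
  have fin: "\<forall>k\<in>{1..m}. finite (Js k)" using sub finite_subset by blast
  have pb: "\<forall>j\<in>{1..n}. p j \<le> pm" unfolding pm_def pmax_def by auto
  have jn: "jstar \<in> {1..n}" using sub hm jh by blast
  have pm1: "pm \<ge> 1" using pos pb jn by force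
  have hi: "h \<noteq> i"
  proof
    assume "h = i"
    then have "Delta p Js h i jstar = 0" unfolding Delta_def by simp
    moreover have "int pm * int pm > 0" using pm1 by simp
    ultimately show False using del by (simp add: power2_eq_square)
  qed
  have finh: "finite (Js h)" and fini: "finite (Js i)" using fin hm im by auto
  have Lset: "\<forall>k\<in>{1..m}. set (L k) = Js k" using fin unfolding L_def seqs_of_def by auto
  have Jh_sub: "Js h \<subseteq> {1..n}" and Ji_sub: "Js i \<subseteq> {1..n}" using sub hm im by auto
  have hidisj: "Js h \<inter> Js i = {}" using disj hm im hi by blast

  define Sh where "Sh = sorted_list_of_set (Jpre Js h jstar)"
  define Bh where "Bh = sorted_list_of_set {k\<in>Js h. jstar < k}"
  define d where "d = card (Jpre Js h jstar) - 2*pm"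
  define A where "A = take d Sh"
  define Hl where "Hl = drop d Sh"
  have finJh: "finite (Jpre Js h jstar)" using finh unfolding Jpre_def by simp
  have finBh: "finite {k\<in>Js h. jstar < k}" using finh by simp
  have sSh: "set Sh = Jpre Js h jstar" "sorted Sh" "distinct Sh" using finJh unfolding Sh_def by auto
  have sBh: "set Bh = {k\<in>Js h. jstar < k}" "sorted Bh" "distinct Bh" using finBh unfolding Bh_def by auto
  have H_eq: "H = set Hl" unfolding H_def JH_def Hl_def Sh_def d_def pm_def by simp
  have Lh0: "L h = Sh @ Bh"
  proof -
    have "Js h = set (Sh @ Bh)" using sSh sBh by (auto simp: Jpre_def)
    moreover have "sorted (Sh @ Bh)" "distinct (Sh @ Bh)" using sSh sBh
      by (auto simp: sorted_append Jpre_def)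
    ultimately show ?thesis unfolding L_def seqs_of_def using sl_set by metis
  qed
  have Lh: "L h = A @ Hl @ Bh" using Lh0 unfolding A_def Hl_def by simp
  have slH: "sorted_list_of_set H = Hl" unfolding H_eq Hl_def
    using sSh by (intro sl_set) (auto simp: sorted_wrt_drop)
  have finH: "finite H" unfolding H_eq by simp
  have Hl_ne: "Hl \<noteq> []" using H'sub H'ne H_eq H_def by auto
  have A_H: "set A \<inter> H = {}" unfolding A_def H_eq Hl_def
    using sSh set_take_disj_set_drop_if_distinct by blast
  have Bh_H: "set Bh \<inter> H = {}" unfolding H_eq Hl_def using sSh sBh
    by (auto simp: Jpre_def dest: in_set_dropD)
  have H_Jh: "H \<subseteq> Js h" unfolding H_eq Hl_def using sSh by (auto simp: Jpre_def dest: in_set_dropD)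
  have lenHl: "length Hl \<le> 2*pm" unfolding Hl_def d_def using sSh
    by (simp add: distinct_card[symmetric])

  define Si where "Si = sorted_list_of_set (Jpre Js i jstar)"
  define Ti where "Ti = sorted_list_of_set (Js i - Jpre Js i jstar)"
  have Tieq: "Js i - Jpre Js i jstar = {k\<in>Js i. jstar < k}" by (auto simp: Jpre_def)
  define Il where "Il = take (2*pm) Ti"
  define Bi where "Bi = drop (2*pm) Ti"
  have finJi: "finite (Jpre Js i jstar)" using fini unfolding Jpre_def by simp
  have finTi: "finite {k\<in>Js i. jstar < k}" using fini by simp
  have sSi: "set Si = Jpre Js i jstar" "sorted Si" "distinct Si" using finJi unfolding Si_def by auto
  have sTi: "set Ti = {k\<in>Js i. jstar < k}" "sorted Ti" "distinct Ti" using finTi unfolding Ti_def Tieq by auto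
  have I_eq: "I = set Il" unfolding I_def JI_def Il_def Ti_def pm_def by simp
  have Li0: "L i = Si @ Ti"
  proof -
    have "Js i = set (Si @ Ti)" using sSi sTi by (auto simp: Jpre_def)
    moreover have "sorted (Si @ Ti)" "distinct (Si @ Ti)" using sSi sTi
      by (auto simp: sorted_append Jpre_def)
    ultimately show ?thesis unfolding L_def seqs_of_def using sl_set by metis
  qed
  have Li: "L i = Si @ Il @ Bi" using Li0 unfolding Il_def Bi_def by simp
  have slI: "sorted_list_of_set I = Il" unfolding I_eq Il_def
    using sTi by (intro sl_set) (auto simp: sorted_wrt_take)
  have finI: "finite I" unfolding I_eq by simp
  have Il_ne: "Il \<noteq> []" using I'sub I'ne I_eq I_def by auto
  have Bi_I: "set Bi \<inter> I = {}" unfolding Bi_def I_eq Il_def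
    using sTi set_take_disj_set_drop_if_distinct by blast
  have Si_I: "set Si \<inter> I = {}" unfolding I_eq Il_def using sSi sTi
    by (auto simp: Jpre_def dest: in_set_takeD)
  have I_Ji: "I \<subseteq> Js i" unfolding I_eq Il_def using sTi by (auto dest: in_set_takeD)
  have lenIl: "length Il \<le> 2*pm" unfolding Il_def by simp
  have dIl: "distinct Il" unfolding Il_def using sTi by simp
  have dHl: "distinct Hl" unfolding Hl_def using sSh by simp

  have H'H: "H' \<subseteq> H" and I'I: "I' \<subseteq> I" using H'sub I'sub H_def I_def by auto
  have finH': "finite H'" and finI': "finite I'" using finite_subset H'H I'I finH finI by auto
  define ysh where "ysh = filter (\<lambda>k. k \<notin> H') Hl @ sorted_list_of_set I'"
  define ysi where "ysi = sorted_list_of_set H' @ filter (\<lambda>k. k \<notin> I') Il"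
  have L'def: "L' = L(h := A @ ysh @ Bh, i := Si @ ysi @ Bi)"
    unfolding L'_def intermediate_def Let_def L_def[symmetric] H_def[symmetric] I_def[symmetric]
      slH slI ysh_def[symmetric] ysi_def[symmetric]
    using replace_block_eq[OF A_H Bh_H H_eq[symmetric] Hl_ne]
      replace_block_eq[OF Si_I Bi_I I_eq[symmetric] Il_ne] Lh Li by simp
  have L'h: "L' h = A @ ysh @ Bh" and L'i: "L' i = Si @ ysi @ Bi" using hi by (auto simp: L'def)
  have L'o: "\<And>k. k \<noteq> h \<Longrightarrow> k \<noteq> i \<Longrightarrow> L' k = L k" by (simp add: L'def)
  have LhJ: "set (L h) = Js h" and LiJ: "set (L i) = Js i" using Lset hm im by auto
  have JhU: "Js h = set A \<union> H \<union> set Bh" using Lh LhJ H_eq by auto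
  have JiU: "Js i = set Si \<union> I \<union> set Bi" using Li LiJ I_eq by auto
  have sL'h: "set (L' h) = (Js h - H') \<union> I'" using JhU H'H A_H Bh_H finI' H_eq
    by (auto simp: L'h ysh_def)
  have sL'i: "set (L' i) = (Js i - I') \<union> H'" using JiU I'I Si_I Bi_I finH' I_eq
    by (auto simp: L'i ysi_def)

  have sL': "\<forall>k\<in>{1..m}. set (L' k) = (if k = h then (Js h - H') \<union> I' else if k = i then (Js i - I') \<union> H' else Js k)"
    using sL'h sL'i L'o Lset by auto
  have H'Jh: "H' \<subseteq> Js h" and I'Ji: "I' \<subseteq> Js i" using H'H H_Jh I'I I_Ji by auto
  have memb: "if j \<in> H' then k = i else if j \<in> I' then k = h else j \<in> Js k"
    if k: "k \<in> {1..m}" "j \<in> set (L' k)" for j k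
  proof (cases "k = h")
    case True
    then show ?thesis using k hidisj H'Jh I'Ji sL'h by auto
  next
    case nh: False
    show ?thesis
    proof (cases "k = i")
      case True
      then show ?thesis using k hidisj H'Jh I'Ji sL'i by auto
    next
      case False
      have jk: "j \<in> Js k" using k L'o[OF nh False] Lset by auto
      have "Js k \<inter> Js h = {}" "Js k \<inter> Js i = {}" using disj k hm im nh False by blast+
      then show ?thesis using jk H'Jh I'Ji by auto
    qed
  qed
  have own': "\<forall>k\<in>{1..m}. j \<in> set (L' k) \<longrightarrow> k = k0" if "k0 \<in> {1..m}" "j \<in> set (L' k0)" for j k0
  proof (intro ballI impI)
    fix k assume k: "k \<in> {1..m}" "j \<in> set (L' k)"
    note m1 = memb[OF k] and m2 = memb[OF that]
    show "k = k0"
    proof (cases "j \<in> H' \<or> j \<in> I'")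
      case True
      then show ?thesis using m1 m2 by (auto split: if_splits)
    next
      case False
      then have "j \<in> Js k" "j \<in> Js k0" using m1 m2 by auto
      then show ?thesis using disj k that by blast
    qed
  qed
  have own: "\<forall>k\<in>{1..m}. j \<in> set (L k) \<longrightarrow> k = k0" if "k0 \<in> {1..m}" "j \<in> set (L k0)" for j k0
    using that Lset disj by blast
  have ct': "ctime p m L' j = pre p (L' k0) j + p j" if "k0 \<in> {1..m}" "j \<in> set (L' k0)" for j k0
    using ctime_single[OF that own'[OF that]] .
  have ct: "ctime p m L j = pre p (L k0) j + p j" if "k0 \<in> {1..m}" "j \<in> set (L k0)" for j k0
    using ctime_single[OF that own[OF that]] .

  have sumSh: "sum_list (map p A) + sum_list (map p Hl) = P p (Jpre Js h jstar)"
  proof -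
    have "sum_list (map p Sh) = sum_list (map p A) + sum_list (map p Hl)"
      unfolding A_def Hl_def by (metis append_take_drop_id map_append sum_list_append)
    moreover have "sum_list (map p Sh) = P p (Jpre Js h jstar)" unfolding Sh_def using sum_list_sorted finJh by blast
    ultimately show ?thesis by simp
  qed
  have sumHl: "sum_list (map p Hl) = P p H" using sum_list_dist[OF dHl] H_eq by simp
  have sumSi: "sum_list (map p Si) = P p (Jpre Js i jstar)" unfolding Si_def using sum_list_sorted finJi by blast
  have sumIl: "sum_list (map p Il) = P p I" using sum_list_dist[OF dIl] I_eq by simp
  have PHb: "P p H \<le> 2*pm*pm"
  proof -
    have "\<forall>x\<in>set Hl. p x \<le> pm" using H_eq H_Jh Jh_sub pb by blast
    then have "sum_list (map p Hl) \<le> length Hl * pm" by (rule sum_list_bound)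
    also have "\<dots> \<le> 2*pm*pm" using lenHl by simp
    finally show ?thesis using sumHl by simp
  qed
  have PIb: "P p I \<le> 2*pm*pm"
  proof -
    have "\<forall>x\<in>set Il. p x \<le> pm" using I_eq I_Ji Ji_sub pb by blast
    then have "sum_list (map p Il) \<le> length Il * pm" by (rule sum_list_bound)
    also have "\<dots> \<le> 2*pm*pm" using lenIl by simp
    finally show ?thesis using sumIl by simp
  qed
  have PHsplit: "P p H = P p (H - H') + P p H'" unfolding P_def using finH H'H
    by (metis add.commute sum.subset_diff)
  have PIsplit: "P p I = P p (I - I') + P p I'" unfolding P_def using finI I'I
    by (metis add.commute sum.subset_diff)
  have Dl: "P p (Jpre Js h jstar) \<ge> P p (Jpre Js i jstar) + 4*pm*pm"
  proof -
    have "int (P p (Jpre Js h jstar)) - int (P p (Jpre Js i jstar)) \<ge> 4 * (int pm * int pm)"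
      using del unfolding Delta_def by (simp add: power2_eq_square)
    then have "int (P p (Jpre Js i jstar) + 4*pm*pm) \<le> int (P p (Jpre Js h jstar))" by simp
    then show ?thesis by (simp only: of_nat_le_iff)
  qed
  have sumysh: "sum_list (map p ysh) = sum_list (map p Hl)"
  proof -
    have "sum_list (map p (filter (\<lambda>k. k \<notin> H') Hl)) = P p (H - H')"
      using sum_list_dist[of "filter (\<lambda>k. k \<notin> H') Hl" p] dHl H_eq by (simp add: set_diff_eq)
    then show ?thesis unfolding ysh_def using sum_list_sorted[OF finI'] sumHl PHsplit eqP by simp
  qed
  have sumysi: "sum_list (map p ysi) = sum_list (map p Il)"
  proof -
    have "sum_list (map p (filter (\<lambda>k. k \<notin> I') Il)) = P p (I - I')"
      using sum_list_dist[of "filter (\<lambda>k. k \<notin> I') Il" p] dIl I_eq by (simp add: set_diff_eq)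
    then show ?thesis unfolding ysi_def using sum_list_sorted[OF finH'] sumIl PIsplit eqP by simp
  qed
  have PH'H: "P p H' \<le> P p H" using PHsplit by simp

  have c1: "ctime p m L' j = ctime p m L j" if j: "j \<in> {1..n} - (H \<union> I)" for j
  proof -
    obtain k0 where k0: "k0 \<in> {1..m}" "j \<in> Js k0" using cover j by blast
    have jL: "j \<in> set (L k0)" using Lset k0 by simp
    show ?thesis
    proof (cases "k0 = h")
      case True
      have jn: "j \<notin> H'" "j \<notin> I'" using j H'H I'Ji hidisj k0 True by auto
      have jL': "j \<in> set (L' h)" using sL'h k0 True jn by auto
      have "pre p (L' h) j = pre p (L h) j"
      proof (cases "j \<in> set A")
        case True then show ?thesis by (simp add: L'h Lh pre_app_in)
      next
        case False
        have "j \<notin> set ysh" using jn j H_eq by (auto simp: ysh_def finI')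
        moreover have "j \<notin> set Hl" using j H_eq by auto
        ultimately show ?thesis using False sumysh
          by (simp add: L'h Lh pre_app_notin del: append_assoc add: append_assoc[symmetric])
      qed
      then show ?thesis using ct'[OF hm jL'] ct[OF hm] jL True by simp
    next
      case nh: False
      show ?thesis
      proof (cases "k0 = i")
        case True
        have jn: "j \<notin> H'" "j \<notin> I'" using j I'I H'Jh hidisj k0 True by auto
        have jL': "j \<in> set (L' i)" using sL'i k0 True jn by auto
        have "pre p (L' i) j = pre p (L i) j"
        proof (cases "j \<in> set Si")
          case True then show ?thesis by (simp add: L'i Li pre_app_in)
        next
          case False
          have "j \<notin> set ysi" using jn j I_eq by (auto simp: ysi_def finH')
          moreover have "j \<notin> set Il" using j I_eq by auto
          ultimately show ?thesis using False sumysi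
            by (simp add: L'i Li pre_app_notin del: append_assoc add: append_assoc[symmetric])
        qed
        then show ?thesis using ct'[OF im jL'] ct[OF im] jL True by simp
      next
        case False
        then show ?thesis using ct'[OF k0(1)] ct[OF k0(1) jL] jL L'o nh by simp
      qed
    qed
  qed
  have c2: "ctime p m L' j \<le> ctime p m L j" if j: "j \<in> H" for j
  proof -
    have jA: "j \<notin> set A" using A_H j by auto
    have jHl: "j \<in> set Hl" using j H_eq by simp
    have old: "ctime p m L j = sum_list (map p A) + pre p Hl j + p j"
      using ct[OF hm] LhJ H_Jh j by (simp add: Lh pre_app_notin jA pre_app_in jHl)
    show ?thesis
    proof (cases "j \<in> H'")
      case True
      have jL': "j \<in> set (L' i)" using sL'i True by auto
      have jSi: "j \<notin> set Si" using sSi hidisj H'Jh True by (auto simp: Jpre_def)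
      have "pre p (L' i) j = sum_list (map p Si) + pre p (sorted_list_of_set H') j"
        using True finH' jSi by (simp add: L'i ysi_def pre_app_notin pre_app_in)
      also have "\<dots> \<le> sum_list (map p Si) + P p H'"
        using pre_le[of p "sorted_list_of_set H'" j] sum_list_sorted[OF finH'] by simp
      finally have "pre p (L' i) j \<le> sum_list (map p Si) + P p H'" .
      then show ?thesis using ct'[OF im jL'] old sumSh sumHl sumSi PHb PH'H Dl by linarith
    next
      case False
      have jL': "j \<in> set (L' h)" using sL'h False j H_Jh by auto
      have jf: "j \<in> set (filter (\<lambda>k. k \<notin> H') Hl)" using False jHl by simp
      have "pre p (L' h) j = sum_list (map p A) + pre p (filter (\<lambda>k. k \<notin> H') Hl) j"
        using jA jf by (simp add: L'h ysh_def pre_app_notin pre_app_in)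
      also have "\<dots> \<le> sum_list (map p A) + pre p Hl j"
        using pre_filter_le[of "\<lambda>k. k \<notin> H'" j p Hl] False by simp
      finally show ?thesis using ct'[OF hm jL'] old by simp
    qed
  qed
  have c3: "ctime p m L' j \<ge> ctime p m L j" if j: "j \<in> I" for j
  proof -
    have jS: "j \<notin> set Si" using Si_I j by auto
    have jIl: "j \<in> set Il" using j I_eq by simp
    have old: "ctime p m L j = sum_list (map p Si) + pre p Il j + p j"
      using ct[OF im] LiJ I_Ji j by (simp add: Li pre_app_notin jS pre_app_in jIl)
    show ?thesis
    proof (cases "j \<in> I'")
      case True
      have jL': "j \<in> set (L' h)" using sL'h True by auto
      have jA: "j \<notin> set A" using hidisj I'Ji True JhU by auto
      have "pre p (L' h) j \<ge> sum_list (map p A)"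
        using jA by (simp add: L'h pre_app_notin)
      moreover have "pre p Il j \<le> P p I" using pre_le[of p Il j] sumIl by simp
      ultimately show ?thesis using ct'[OF hm jL'] old sumSh sumHl sumSi PHb PIb Dl by linarith
    next
      case False
      have jL': "j \<in> set (L' i)" using sL'i False j I_Ji by auto
      have jH': "j \<notin> set (sorted_list_of_set H')" using finH' H'Jh hidisj j I_Ji by auto
      have jf: "j \<in> set (filter (\<lambda>k. k \<notin> I') Il)" using False jIl by simp
      have "pre p (L' i) j = sum_list (map p Si) + P p H' + pre p (filter (\<lambda>k. k \<notin> I') Il) j"
        using jS jf jH' sum_list_sorted[OF finH'] by (simp add: L'i ysi_def pre_app_notin pre_app_in)
      moreover have "pre p Il j \<le> pre p (filter (\<lambda>k. k \<notin> I') Il) j + P p I'"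
      proof -
        have "sum_list (map p (filter (\<lambda>x. \<not> x \<notin> I') Il)) = P p I'"
        proof -
          have "set (filter (\<lambda>x. \<not> x \<notin> I') Il) = I'" using I'I I_eq by auto
          then show ?thesis using sum_list_dist[of "filter (\<lambda>x. \<not> x \<notin> I') Il" p] dIl by simp
        qed
        then show ?thesis using pre_filter_ge[of p Il j "\<lambda>k. k \<notin> I'"] by simp
      qed
      ultimately show ?thesis using ct'[OF im jL'] old eqP by linarith
    qed
  qed
  show ?thesis using c1 c2 c3 unfolding L'_def[symmetric] L_def[symmetric] H_def[symmetric] I_def[symmetric]
    by blast
qed

end
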